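(* Let $\{X_n\}_{n\in\mathbb{N}}$ be a family of real Banach spaces, $Z_0=\bigoplus^{c_0}_{n\in\mathbb{N}}X_n$, and let $A$ be a separable subset of $Z_0$. Let $Y$ be a real Banach space and $\Delta:S_{Z_0}\to S_Y$ a surjective isometry. Then there exist separable subspaces $M_n\subseteq X_n$ ($n\in\mathbb{N}$) and $N\subseteq Y$ such that $A\subseteq\bigoplus^{c_0}_{n\in\mathbb{N}}M_n$ and $\Delta\big(S_{\bigoplus^{c_0}_{n\in\mathbb{N}}M_n}\big)=S_N$.
   Context: $\bigoplus^{c_0}_{n\in\mathbb{N}}X_n$ is the space of sequences $(x_n)$ with $x_n\in X_n$ and $\|x_n\|\to 0$, with the sup norm; $S_E$ denotes the unit sphere of a normed space $E$. *)

theory Defs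
  imports "HOL-Analysis.Analysis"
begin

text \<open>The c0-sum of a family of subspaces X n of a common real Banach space:
  sequences f with f n in X n and norm (f n) tending to 0.\<close>
definition c0sum :: "(nat \<Rightarrow> 'a::real_normed_vector set) \<Rightarrow> (nat \<Rightarrow> 'a) set" where
  "c0sum X = {f. (\<forall>n. f n \<in> X n) \<and> (\<lambda>n. norm (f n)) \<longlonglongrightarrow> 0}"

definition supnorm :: "(nat \<Rightarrow> 'a::real_normed_vector) \<Rightarrow> real" where
  "supnorm f = (SUP n. norm (f n))"

definition c0sphere :: "(nat \<Rightarrow> 'a::real_normed_vector set) \<Rightarrow> (nat \<Rightarrow> 'a) set" where
  "c0sphere X = {f \<in> c0sum X. supnorm f = 1}"

definition sup_separable :: "(nat \<Rightarrow> 'a::real_normed_vector) set \<Rightarrow> bool" where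
  "sup_separable A \<longleftrightarrow> (\<exists>D. countable D \<and> D \<subseteq> A \<and>
     (\<forall>f\<in>A. \<forall>e>0. \<exists>d\<in>D. supnorm (\<lambda>n. f n - d n) < e))"

end

theory Submission
  imports Defs
begin


definition bddn :: "(nat \<Rightarrow> 'a::real_normed_vector) \<Rightarrow> bool" where
  "bddn h \<longleftrightarrow> (\<exists>B. \<forall>n. norm (h n) \<le> B)"

lemma supnorm_upper: "bddn h \<Longrightarrow> norm (h n) \<le> supnorm h"
  unfolding supnorm_def bddn_def
  by (rule cSUP_upper) (auto simp: bdd_above_def)

lemma supnorm_least: "(\<And>n. norm (h n) \<le> c) \<Longrightarrow> supnorm h \<le> c"
  unfolding supnorm_def by (rule cSUP_least) auto

lemma supnorm_nonneg: "bddn h \<Longrightarrow> 0 \<le> supnorm h"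
  using supnorm_upper[of h 0] norm_ge_zero order_trans by blast

lemma bddn_diff: "bddn f \<Longrightarrow> bddn g \<Longrightarrow> bddn (\<lambda>n. f n - g n)"
  unfolding bddn_def
proof (elim exE)
  fix B C assume b: "\<forall>n. norm (f n) \<le> B" and c: "\<forall>n. norm (g n) \<le> C"
  show "\<exists>B. \<forall>n. norm (f n - g n) \<le> B"
    by (rule exI[of _ "B+C"]) (metis add_mono b c norm_triangle_ineq4 order_trans)
qed

lemma bddn_scale: "bddn f \<Longrightarrow> bddn (\<lambda>n. c *\<^sub>R f n)"
  unfolding bddn_def
proof (elim exE)
  fix B assume b: "\<forall>n. norm (f n) \<le> B"
  show "\<exists>B. \<forall>n. norm (c *\<^sub>R f n) \<le> B"
    by (rule exI[of _ "\<bar>c\<bar>*B"]) (simp add: b mult_left_mono)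
qed

lemma c0sum_bddn: "f \<in> c0sum X \<Longrightarrow> bddn f"
  unfolding c0sum_def bddn_def
  using convergent_imp_bounded[of "\<lambda>n. norm (f n)"]
  by (auto simp: convergent_def bounded_iff)

lemma supnorm_triangle:
  assumes "bddn f" "bddn g" "bddn h"
  shows "supnorm (\<lambda>n. f n - h n) \<le> supnorm (\<lambda>n. f n - g n) + supnorm (\<lambda>n. g n - h n)"
proof (rule supnorm_least)
  fix n
  have "norm (f n - h n) \<le> norm (f n - g n) + norm (g n - h n)"
    by (rule norm_diff_triangle_ineq[of "f n" "g n" "g n" "h n", simplified])
  also have "\<dots> \<le> supnorm (\<lambda>n. f n - g n) + supnorm (\<lambda>n. g n - h n)"
    using supnorm_upper[OF bddn_diff[OF assms(1,2)], of n] supnorm_upper[OF bddn_diff[OF assms(2,3)], of n]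
    by simp
  finally show "norm (f n - h n) \<le> \<dots>" .
qed

lemma supnorm_sym: "supnorm (\<lambda>n. f n - g n) = supnorm (\<lambda>n. g n - f n)"
  unfolding supnorm_def by (simp add: norm_minus_commute)

lemma supnorm_comp_le: "bddn f \<Longrightarrow> bddn g \<Longrightarrow> norm (f n - g n) \<le> supnorm (\<lambda>n. f n - g n)"
  using supnorm_upper[OF bddn_diff] by blast

lemma supnorm_scale:
  assumes "bddn h"
  shows "supnorm (\<lambda>n. c *\<^sub>R h n) = \<bar>c\<bar> * supnorm h"
proof (cases "c = 0")
  case True
  then show ?thesis by (simp add: supnorm_def)
next
  case False
  show ?thesis
  proof (rule antisym)
    show "supnorm (\<lambda>n. c *\<^sub>R h n) \<le> \<bar>c\<bar> * supnorm h"
      by (rule supnorm_least) (simp add: assms mult_left_mono supnorm_upper)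
    have "supnorm h \<le> supnorm (\<lambda>n. c *\<^sub>R h n) / \<bar>c\<bar>"
    proof (rule supnorm_least)
      fix n
      have "\<bar>c\<bar> * norm (h n) \<le> supnorm (\<lambda>n. c *\<^sub>R h n)"
        using supnorm_upper[OF bddn_scale[OF assms, of c], of n] by simp
      then show "norm (h n) \<le> supnorm (\<lambda>n. c *\<^sub>R h n) / \<bar>c\<bar>"
        using False by (simp add: field_simps mult.commute)
    qed
    then show "\<bar>c\<bar> * supnorm h \<le> supnorm (\<lambda>n. c *\<^sub>R h n)"
      using False by (simp add: field_simps mult.commute)
  qed
qed

lemma supnorm_rev_triangle:
  assumes "bddn f" "bddn g"
  shows "\<bar>supnorm f - supnorm g\<bar> \<le> supnorm (\<lambda>n. f n - g n)"
proof -
  have 1: "supnorm f \<le> supnorm (\<lambda>n. f n - g n) + supnorm g"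
  proof (rule supnorm_least)
    fix n show "norm (f n) \<le> supnorm (\<lambda>n. f n - g n) + supnorm g"
      using supnorm_comp_le[OF assms, of n] supnorm_upper[OF assms(2), of n] norm_triangle_ineq2[of "f n" "g n"]
      by linarith
  qed
  have 2: "supnorm g \<le> supnorm (\<lambda>n. f n - g n) + supnorm f"
  proof (rule supnorm_least)
    fix n show "norm (g n) \<le> supnorm (\<lambda>n. f n - g n) + supnorm f"
      using supnorm_comp_le[OF assms, of n] supnorm_upper[OF assms(1), of n] norm_triangle_ineq2[of "g n" "f n"] norm_minus_commute[of "g n" "f n"]
      by linarith
  qed
  show ?thesis using 1 2 by linarith
qed



definition qlc :: "(rat \<times> 'a::real_vector) list \<Rightarrow> 'a" where
  "qlc l = sum_list (map (\<lambda>(q,v). of_rat q *\<^sub>R v) l)"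

definition qspan :: "'a::real_vector set \<Rightarrow> 'a set" where
  "qspan C = qlc ` lists (UNIV \<times> C)"

lemma countable_qspan: "countable C \<Longrightarrow> countable (qspan C)"
  unfolding qspan_def by (intro countable_image countable_lists) auto

lemma qspan_0: "0 \<in> qspan C"
  unfolding qspan_def qlc_def by (rule image_eqI[of _ _ "[]"]) auto

lemma qspan_base: "x \<in> C \<Longrightarrow> x \<in> qspan C"
  unfolding qspan_def qlc_def by (rule image_eqI[of _ _ "[(1,x)]"]) auto

lemma qspan_add: "x \<in> qspan C \<Longrightarrow> y \<in> qspan C \<Longrightarrow> x + y \<in> qspan C"
  unfolding qspan_def
proof (elim imageE)
  fix l m assume "x = qlc l" "l \<in> lists (UNIV \<times> C)" "y = qlc m" "m \<in> lists (UNIV \<times> C)"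
  then show "x + y \<in> qlc ` lists (UNIV \<times> C)"
    by (intro image_eqI[of _ _ "l @ m"]) (auto simp: qlc_def)
qed

lemma qlc_scale: "qlc (map (\<lambda>(p,v). (r*p, v)) l) = of_rat r *\<^sub>R qlc l"
  by (induction l) (auto simp: qlc_def of_rat_mult scaleR_add_right)

lemma qspan_scale: "x \<in> qspan C \<Longrightarrow> of_rat r *\<^sub>R x \<in> qspan C"
  unfolding qspan_def
proof (elim imageE)
  fix l assume "x = qlc l" "l \<in> lists (UNIV \<times> C)"
  then show "of_rat r *\<^sub>R x \<in> qlc ` lists (UNIV \<times> C)"
    by (intro image_eqI[of _ _ "map (\<lambda>(p,v). (r*p, v)) l"]) (auto simp: qlc_scale)
qed

lemma qspan_mono: "C \<subseteq> D \<Longrightarrow> qspan C \<subseteq> qspan D"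
  unfolding qspan_def by (intro image_mono lists_mono) auto

lemma qspan_subspace: "subspace V \<Longrightarrow> C \<subseteq> V \<Longrightarrow> qspan C \<subseteq> V"
proof
  fix x assume V: "subspace V" "C \<subseteq> V" and "x \<in> qspan C"
  then obtain l where l: "x = qlc l" "l \<in> lists (UNIV \<times> C)" unfolding qspan_def by auto
  have "qlc l \<in> V" using l(2)
    by (induction l) (use V in \<open>auto simp: qlc_def subspace_0 intro!: subspace_add subspace_scale\<close>)
  then show "x \<in> V" using l by simp
qed

lemma closure_qspan_subspace:
  fixes C :: "'a::real_normed_vector set"
  shows "subspace (closure (qspan C))"
proof -
  let ?S = "qspan C"
  have add: "x + y \<in> closure ?S" if "x \<in> closure ?S" "y \<in> closure ?S" for x y
  proof -
    have "x + y \<in> closure ?S + closure ?S" using that by (auto simp: set_plus_def)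
    also have "\<dots> \<subseteq> closure (?S + ?S)" by (rule closure_sum)
    also have "\<dots> \<subseteq> closure ?S"
      by (rule closure_mono) (auto simp: set_plus_def intro: qspan_add)
    finally show ?thesis .
  qed
  have qsc: "of_rat r *\<^sub>R x \<in> closure ?S" if "x \<in> closure ?S" for x r
  proof -
    have "of_rat r *\<^sub>R x \<in> (*\<^sub>R) (of_rat r) ` closure ?S" using that by auto
    also have "\<dots> = closure ((*\<^sub>R) (of_rat r) ` ?S)" by (simp add: closure_scaleR)
    also have "\<dots> \<subseteq> closure ?S" by (rule closure_mono) (auto intro: qspan_scale)
    finally show ?thesis .
  qed
  have sc: "c *\<^sub>R x \<in> closure ?S" if "x \<in> closure ?S" for x c
  proof -
    obtain r :: "nat \<Rightarrow> rat" where r: "(\<lambda>n. of_rat (r n)) \<longlonglongrightarrow> c"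
    proof -
      have "c \<in> closure (range (of_rat :: rat \<Rightarrow> real))"
        using Rats_closure_real by (simp add: Rats_def)
      then obtain s where s: "\<forall>n. s n \<in> range (of_rat :: rat \<Rightarrow> real)" "s \<longlonglongrightarrow> c"
        by (auto simp: closure_sequential)
      then have "\<forall>n. \<exists>q. s n = of_rat q" by auto
      then obtain r where "\<forall>n. s n = of_rat (r n)" by metis
      then have "s = (\<lambda>n. of_rat (r n))" by auto
      with s show ?thesis using that by auto
    qed
    have "(\<lambda>n. of_rat (r n) *\<^sub>R x) \<longlonglongrightarrow> c *\<^sub>R x"
      by (intro tendsto_scaleR r tendsto_const)
    then show ?thesis
      using qsc[OF that] closed_sequentially[OF closed_closure, of "\<lambda>n. of_rat (r n) *\<^sub>R x" "qspan C" "c *\<^sub>R x"] by blast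
  qed
  show ?thesis unfolding subspace_def
    using add sc qspan_0 closure_subset by blast
qed

lemma separable_closure_countable:
  assumes "countable T"
  shows "separable_space (top_of_set (closure T))"
  unfolding separable_space_def
proof (rule exI[of _ T], intro conjI)
  have "closure T \<inter> T = T" using closure_subset by blast
  then show "top_of_set (closure T) closure_of T = topspace (top_of_set (closure T))"
    by (simp add: closure_of_subtopology)
qed (use assms closure_subset in auto)




lemma sep_subset:
  fixes \<rho> :: "'x \<Rightarrow> 'x \<Rightarrow> real"
  assumes cD: "countable D" and DB: "D \<subseteq> B" and dense: "\<forall>b\<in>B. \<forall>e>0. \<exists>d\<in>D. \<rho> b d < e"
    and AB: "A \<subseteq> B"
    and tri: "\<forall>x\<in>B. \<forall>y\<in>B. \<forall>z\<in>B. \<rho> x z \<le> \<rho> x y + \<rho> y z"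
    and sym: "\<forall>x\<in>B. \<forall>y\<in>B. \<rho> x y = \<rho> y x"
  shows "\<exists>D'. countable D' \<and> D' \<subseteq> A \<and> (\<forall>a\<in>A. \<forall>e>0. \<exists>d\<in>D'. \<rho> a d < e)"
proof -
  define pick where "pick = (\<lambda>(d, m::nat). SOME a. a \<in> A \<and> \<rho> a d < 1 / real (Suc m))"
  define I where "I = {(d, m::nat). d \<in> D \<and> (\<exists>a\<in>A. \<rho> a d < 1 / real (Suc m))}"
  have pick: "pick (d,m) \<in> A \<and> \<rho> (pick (d,m)) d < 1 / real (Suc m)" if "(d,m) \<in> I" for d m
  proof -
    have "\<exists>a. a \<in> A \<and> \<rho> a d < 1 / real (Suc m)" using that unfolding I_def by auto
    from someI_ex[OF this] show ?thesis unfolding pick_def by simp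
  qed
  have "I \<subseteq> D \<times> UNIV" unfolding I_def by blast
  moreover have "countable (D \<times> (UNIV :: nat set))" using cD by simp
  ultimately have "countable I" by (rule countable_subset)
  then have c1: "countable (pick ` I)" by (rule countable_image)
  have c2: "pick ` I \<subseteq> A"
  proof
    fix x assume "x \<in> pick ` I"
    then obtain p where p: "p \<in> I" "x = pick p" by blast
    obtain d m where "p = (d,m)" by (cases p)
    then show "x \<in> A" using pick[of d m] p by simp
  qed
  have c3: "\<exists>d\<in>pick ` I. \<rho> a d < e" if a: "a \<in> A" and e: "e > 0" for a e
  proof -
    have "e/2 > 0" using e by simp
    from reals_Archimedean[OF this] obtain m where m: "inverse (real (Suc m)) < e / 2" by blast
    have aB: "a \<in> B" using a AB by blast
    have "0 < 1 / real (Suc m)" by simp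
    then obtain d where d: "d \<in> D" "\<rho> a d < 1 / real (Suc m)" using dense aB by blast
    then have dm: "(d,m) \<in> I" using a unfolding I_def by blast
    have pB: "pick (d,m) \<in> B" using pick[OF dm] AB by blast
    have dB: "d \<in> B" using d DB by blast
    have t1: "\<rho> a (pick (d,m)) \<le> \<rho> a d + \<rho> d (pick (d,m))"
      using tri aB dB pB by blast
    have t2: "\<rho> d (pick (d,m)) = \<rho> (pick (d,m)) d" using sym dB pB by blast
    have t3: "\<rho> (pick (d,m)) d < inverse (real (Suc m))" using pick[OF dm] by (simp add: inverse_eq_divide)
    have t4: "\<rho> a d < inverse (real (Suc m))" using d(2) by (simp add: inverse_eq_divide)
    have "\<rho> a (pick (d,m)) < e" using t1 t2 t3 t4 m by linarith
    then show ?thesis using dm by blast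
  qed
  show ?thesis
  proof (intro exI[of _ "pick ` I"] conjI c1 c2 ballI allI impI)
    fix a and e :: real assume "a \<in> A" "e > 0"
    then show "\<exists>d\<in>pick ` I. \<rho> a d < e" by (rule c3)
  qed
qed




definition fin :: "'a list \<Rightarrow> nat \<Rightarrow> 'a::zero" where
  "fin l n = (if n < length l then l ! n else 0)"

lemma c0sum_sep:
  fixes C :: "nat \<Rightarrow> 'a::real_normed_vector set"
  assumes cC: "\<And>n. countable (C n)" and zC: "\<And>n. 0 \<in> C n"
  shows "\<exists>D. countable D \<and> D \<subseteq> c0sum (\<lambda>n. closure (C n)) \<and>
     (\<forall>f\<in>c0sum (\<lambda>n. closure (C n)). \<forall>e>0. \<exists>d\<in>D. supnorm (\<lambda>n. f n - d n) < e)"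
proof -
  define D where "D = {fin l | l. \<forall>n<length l. l ! n \<in> C n}"
  have "D \<subseteq> fin ` lists (\<Union>n. C n)"
  proof
    fix d assume "d \<in> D"
    then obtain l where l: "d = fin l" "\<forall>n<length l. l ! n \<in> C n" by (auto simp: D_def)
    then have "set l \<subseteq> (\<Union>n. C n)" by (auto simp: in_set_conv_nth) blast
    then show "d \<in> fin ` lists (\<Union>n. C n)" using l by auto
  qed
  moreover have "countable (fin ` lists (\<Union>n. C n))"
    using cC by (intro countable_image countable_lists countable_UN) auto
  ultimately have cD: "countable D" by (rule countable_subset)
  have finC: "fin l n \<in> C n" if "\<forall>n<length l. l ! n \<in> C n" for l n
    using that zC by (auto simp: fin_def)
  have DS: "D \<subseteq> c0sum (\<lambda>n. closure (C n))"
  proof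
    fix d assume "d \<in> D"
    then obtain l where l: "d = fin l" "\<forall>n<length l. l ! n \<in> C n" by (auto simp: D_def)
    have "(\<lambda>n. norm (d n)) \<longlonglongrightarrow> 0"
      by (rule tendsto_eventually) (auto simp: l(1) fin_def eventually_sequentially intro!: exI[of _ "length l"])
    then show "d \<in> c0sum (\<lambda>n. closure (C n))"
      using finC[OF l(2)] closure_subset l(1) by (auto simp: c0sum_def)
  qed
  have "\<exists>d\<in>D. supnorm (\<lambda>n. f n - d n) < e" if f: "f \<in> c0sum (\<lambda>n. closure (C n))" and e: "e > 0" for f e
  proof -
    have "(\<lambda>n. norm (f n)) \<longlonglongrightarrow> 0" using f by (auto simp: c0sum_def)
    then obtain K where K: "\<forall>n\<ge>K. norm (norm (f n) - 0) < e/2"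
      using LIMSEQ_D[OF \<open>(\<lambda>n. norm (f n)) \<longlonglongrightarrow> 0\<close>, of "e/2"] e by auto
    then have K: "\<forall>n\<ge>K. norm (f n) < e/2" by simp
    have "\<forall>n. \<exists>c\<in>C n. dist c (f n) < e/2"
    proof
      fix n
      have fn: "f n \<in> closure (C n)" using f by (auto simp: c0sum_def)
      then show "\<exists>c\<in>C n. dist c (f n) < e/2"
        using closure_approachable[THEN iffD1, OF fn, rule_format, of "e/2"] e by auto
    qed
    then obtain c where c: "\<And>n. c n \<in> C n" "\<And>n. dist (c n) (f n) < e/2" by metis
    define l where "l = map c [0..<K]"
    have l: "\<forall>n<length l. l ! n \<in> C n" by (auto simp: l_def c)
    have "supnorm (\<lambda>n. f n - fin l n) \<le> e/2"
    proof (rule supnorm_least)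
      fix n show "norm (f n - fin l n) \<le> e/2"
        using K c(2)[of n] by (cases "n < K") (auto simp: fin_def l_def dist_norm norm_minus_commute less_imp_le)
    qed
    then have "supnorm (\<lambda>n. f n - fin l n) < e" using e by linarith
    moreover have "fin l \<in> D" unfolding D_def using l by blast
    ultimately show ?thesis by blast
  qed
  then show ?thesis using cD DS by blast
qed




lemma trunc_approx:
  fixes Mk :: "nat \<Rightarrow> nat \<Rightarrow> 'a::real_normed_vector set"
  assumes mono: "\<And>i j n. i \<le> j \<Longrightarrow> Mk i n \<subseteq> Mk j n" and z: "\<And>k n. 0 \<in> Mk k n"
    and f: "f \<in> c0sum (\<lambda>n. closure (\<Union>k. Mk k n))" and e: "e > 0"
  shows "\<exists>k g. g \<in> c0sum (Mk k) \<and> supnorm (\<lambda>n. f n - g n) < e"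
proof -
  have "(\<lambda>n. norm (f n)) \<longlonglongrightarrow> 0" using f by (auto simp: c0sum_def)
  then obtain K where K: "\<forall>n\<ge>K. norm (norm (f n) - 0) < e/2"
    using LIMSEQ_D[OF \<open>(\<lambda>n. norm (f n)) \<longlonglongrightarrow> 0\<close>, of "e/2"] e by auto
  then have K: "\<forall>n\<ge>K. norm (f n) < e/2" by simp
  have "\<forall>n. \<exists>k. \<exists>c\<in>Mk k n. dist c (f n) < e/2"
  proof
    fix n
    have fn: "f n \<in> closure (\<Union>k. Mk k n)" using f by (auto simp: c0sum_def)
    then obtain c where "c \<in> (\<Union>k. Mk k n)" "dist c (f n) < e/2"
      using closure_approachable[THEN iffD1, OF fn, rule_format, of "e/2"] e by auto
    then show "\<exists>k. \<exists>c\<in>Mk k n. dist c (f n) < e/2" by blast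
  qed
  then obtain kk c where c: "\<And>n. c n \<in> Mk (kk n) n" "\<And>n. dist (c n) (f n) < e/2" by metis
  define k where "k = Max (kk ` {..<K})"
  define g where "g = (\<lambda>n. if n < K then c n else 0)"
  have gM: "g n \<in> Mk k n" for n
  proof (cases "n < K")
    case True
    then have "kk n \<le> k" unfolding k_def by (intro Max_ge) auto
    then show ?thesis using c(1)[of n] mono True by (auto simp: g_def)
  qed (auto simp: g_def z)
  have "(\<lambda>n. norm (g n)) \<longlonglongrightarrow> 0"
    by (rule tendsto_eventually) (auto simp: g_def eventually_sequentially intro!: exI[of _ K])
  then have "g \<in> c0sum (Mk k)" using gM by (auto simp: c0sum_def)
  moreover have "supnorm (\<lambda>n. f n - g n) \<le> e/2"
  proof (rule supnorm_least)
    fix n show "norm (f n - g n) \<le> e/2"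
      using K c(2)[of n] by (cases "n < K") (auto simp: g_def dist_norm norm_minus_commute less_imp_le)
  qed
  ultimately show ?thesis using e by (intro exI[of _ k] exI[of _ g]) auto
qed




lemma normalize_approx:
  assumes f: "f \<in> c0sphere X" and g: "g \<in> c0sum M" and M: "\<And>n. subspace (M n)"
    and fg: "supnorm (\<lambda>n. f n - g n) < e" and e: "e \<le> 1/2"
  shows "(\<lambda>n. (1 / supnorm g) *\<^sub>R g n) \<in> c0sphere M \<and>
         supnorm (\<lambda>n. f n - (1 / supnorm g) *\<^sub>R g n) < 2 * e"
proof -
  define s where "s = supnorm g"
  have bf: "bddn f" using f by (auto simp: c0sphere_def intro: c0sum_bddn)
  have bg: "bddn g" using g by (rule c0sum_bddn)
  have f1: "supnorm f = 1" using f by (auto simp: c0sphere_def)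
  have "\<bar>1 - s\<bar> < e" using supnorm_rev_triangle[OF bf bg] fg f1 s_def by simp
  then have s: "s > 0" using e by linarith
  define h where "h = (\<lambda>n. (1 / s) *\<^sub>R g n)"
  have bh: "bddn h" unfolding h_def by (rule bddn_scale[OF bg])
  have "(\<lambda>n. norm (g n)) \<longlonglongrightarrow> 0" using g by (auto simp: c0sum_def)
  then have "(\<lambda>n. (1/s) * norm (g n)) \<longlonglongrightarrow> 0" by (rule tendsto_mult_right_zero)
  then have "(\<lambda>n. norm (h n)) \<longlonglongrightarrow> 0" using s by (simp add: h_def)
  moreover have "h n \<in> M n" for n using g M by (auto simp: h_def c0sum_def subspace_scale)
  moreover have "supnorm h = 1" unfolding h_def using supnorm_scale[OF bg, of "1/s"] s s_def by simp
  ultimately have hS: "h \<in> c0sphere M" by (auto simp: c0sphere_def c0sum_def)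
  have "(\<lambda>n. g n - h n) = (\<lambda>n. (1 - 1/s) *\<^sub>R g n)" by (auto simp: h_def algebra_simps)
  then have "supnorm (\<lambda>n. g n - h n) = \<bar>1 - 1/s\<bar> * s"
    using supnorm_scale[OF bg] s_def by simp
  also have "\<dots> = \<bar>s - 1\<bar>" using s by (simp add: abs_mult[symmetric] field_simps)
  finally have gh: "supnorm (\<lambda>n. g n - h n) < e" using \<open>\<bar>1 - s\<bar> < e\<close> by simp
  have "supnorm (\<lambda>n. f n - h n) < 2 * e"
    using supnorm_triangle[OF bf bg bh] fg gh by simp
  then show ?thesis using hS by (simp add: h_def s_def)
qed




lemma c0sum_mono: "(\<And>n. M n \<subseteq> M' n) \<Longrightarrow> c0sum M \<subseteq> c0sum M'"
  unfolding c0sum_def by blast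

lemma c0sphere_mono: "(\<And>n. M n \<subseteq> M' n) \<Longrightarrow> c0sphere M \<subseteq> c0sphere M'"
  unfolding c0sphere_def using c0sum_mono by blast

lemma lists_chain:
  fixes C :: "nat \<Rightarrow> 'b set"
  assumes mono: "\<And>i j. i \<le> j \<Longrightarrow> C i \<subseteq> C j"
  shows "l \<in> lists (UNIV \<times> (\<Union>k. C k)) \<Longrightarrow> \<exists>k. l \<in> lists (UNIV \<times> C k)"
proof (induction l)
  case Nil
  then show ?case by auto
next
  case (Cons a l)
  obtain q v where a: "a = (q, v)" by (cases a)
  from Cons.prems a obtain j where j: "v \<in> C j" by auto
  from Cons.prems Cons.IH obtain i where i: "l \<in> lists (UNIV \<times> C i)" by auto
  have "l \<in> lists (UNIV \<times> C (max i j))"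
  proof -
    have "C i \<subseteq> C (max i j)" by (rule mono) simp
    then have "UNIV \<times> C i \<subseteq> UNIV \<times> C (max i j)" by (simp add: Sigma_mono)
    then show ?thesis using i lists_mono by blast
  qed
  moreover have "C j \<subseteq> C (max i j)" by (rule mono) simp
  then have "v \<in> C (max i j)" using j by blast
  ultimately show ?case using a by (intro exI[of _ "max i j"]) auto
qed

lemma qspan_chain:
  fixes C :: "nat \<Rightarrow> 'a::real_vector set"
  assumes mono: "\<And>i j. i \<le> j \<Longrightarrow> C i \<subseteq> C j"
  shows "qspan (\<Union>k. C k) \<subseteq> (\<Union>k. qspan (C k))"
proof
  fix x assume "x \<in> qspan (\<Union>k. C k)"
  then obtain l where l: "x = qlc l" "l \<in> lists (UNIV \<times> (\<Union>k. C k))" unfolding qspan_def by blast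
  obtain k where "l \<in> lists (UNIV \<times> C k)" using lists_chain[OF mono l(2)] by blast
  then have "x \<in> qspan (C k)" using l(1) unfolding qspan_def by blast
  then show "x \<in> (\<Union>k. qspan (C k))" by blast
qed



theorem lemma3p5:
  fixes X :: "nat \<Rightarrow> 'a::banach set"
    and A :: "(nat \<Rightarrow> 'a) set"
    and \<Delta> :: "(nat \<Rightarrow> 'a) \<Rightarrow> 'b::banach"
  assumes X_sub: "\<And>n. subspace (X n) \<and> closed (X n)"
    and A_sub: "A \<subseteq> c0sum X"
    and A_sep: "sup_separable A"
    and Delta_isom: "\<forall>f\<in>c0sphere X. \<forall>g\<in>c0sphere X.
                       dist (\<Delta> f) (\<Delta> g) = supnorm (\<lambda>n. f n - g n)"
    and Delta_onto: "\<Delta> ` c0sphere X = sphere 0 1"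
  shows "\<exists>M :: nat \<Rightarrow> 'a set. \<exists>N :: 'b set.
           (\<forall>n. subspace (M n) \<and> closed (M n) \<and> M n \<subseteq> X n \<and>
                separable_space (top_of_set (M n))) \<and>
           subspace N \<and> closed N \<and> separable_space (top_of_set N) \<and>
           A \<subseteq> c0sum M \<and>
           \<Delta> ` c0sphere M = N \<inter> sphere 0 1"
proof -
  define S where "S = c0sphere X"
  define SY where "SY = sphere (0::'b) 1"
  obtain D0 where D0c: "countable D0" and D0A: "D0 \<subseteq> A"
    and D0d: "\<forall>f\<in>A. \<forall>e>0. \<exists>d\<in>D0. supnorm (\<lambda>n. f n - d n) < e"
    using A_sep unfolding sup_separable_def by blast
  define \<Gamma> where "\<Gamma> = inv_into S \<Delta>"
  have \<Gamma>1: "\<Gamma> y \<in> S" if "y \<in> SY" for y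
    using that Delta_onto unfolding \<Gamma>_def S_def SY_def by (metis inv_into_into)
  have \<Gamma>2: "\<Delta> (\<Gamma> y) = y" if "y \<in> SY" for y
    using that Delta_onto unfolding \<Gamma>_def S_def SY_def by (metis f_inv_into_f)
  have SX: "S \<subseteq> c0sum X" by (auto simp: S_def c0sphere_def)
  have \<Delta>S: "\<Delta> f \<in> SY" if "f \<in> S" for f
    using that Delta_onto unfolding S_def SY_def by blast
  have iso: "dist (\<Delta> f) (\<Delta> g) = supnorm (\<lambda>n. f n - g n)" if "f \<in> S" "g \<in> S" for f g
    using that Delta_isom unfolding S_def by blast
  have Xs: "subspace (X n)" for n using X_sub by blast
  have Xc: "closed (X n)" for n using X_sub by blast
  define Mof where "Mof = (\<lambda>(D :: (nat \<Rightarrow> 'a) set) n. closure (qspan ((\<lambda>d. d n) ` D)))"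
  define Nof where "Nof = (\<lambda>E :: 'b set. closure (qspan E))"
  have Mof_sub: "subspace (Mof D n)" for D n unfolding Mof_def by (simp add: closure_qspan_subspace)
  have Mof_X: "Mof D n \<subseteq> X n" if "D \<subseteq> c0sum X" for D n
  proof -
    have "(\<lambda>d. d n) ` D \<subseteq> X n" using that by (auto simp: c0sum_def)
    then have "qspan ((\<lambda>d. d n) ` D) \<subseteq> X n" by (rule qspan_subspace[OF Xs])
    then show ?thesis unfolding Mof_def by (simp add: closure_minimal Xc)
  qed
  have Mof_0: "0 \<in> Mof D n" for D n unfolding Mof_def using qspan_0 closure_subset by blast
  have Pex: "\<exists>P. countable P \<and> P \<subseteq> c0sphere (Mof D) \<and>
      (\<forall>f\<in>c0sphere (Mof D). \<forall>e>0. \<exists>p\<in>P. supnorm (\<lambda>n. f n - p n) < e)" if "countable D" for D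
  proof -
    let ?C = "\<lambda>n. qspan ((\<lambda>d. d n) ` D)"
    have cC: "countable (?C n)" for n using that by (intro countable_qspan countable_image)
    obtain DD where DD: "countable DD" "DD \<subseteq> c0sum (\<lambda>n. closure (?C n))"
      "\<forall>f\<in>c0sum (\<lambda>n. closure (?C n)). \<forall>e>0. \<exists>d\<in>DD. supnorm (\<lambda>n. f n - d n) < e"
      using c0sum_sep[of ?C, OF cC qspan_0] by blast
    have eq: "(\<lambda>n. closure (?C n)) = Mof D" unfolding Mof_def by simp
    have tri: "\<forall>x\<in>c0sum (Mof D). \<forall>y\<in>c0sum (Mof D). \<forall>z\<in>c0sum (Mof D).
        supnorm (\<lambda>n. x n - z n) \<le> supnorm (\<lambda>n. x n - y n) + supnorm (\<lambda>n. y n - z n)"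
      using supnorm_triangle c0sum_bddn by blast
    have sym: "\<forall>x\<in>c0sum (Mof D). \<forall>y\<in>c0sum (Mof D).
        supnorm (\<lambda>n. x n - y n) = supnorm (\<lambda>n. y n - x n)"
      using supnorm_sym by blast
    have sub: "c0sphere (Mof D) \<subseteq> c0sum (Mof D)" by (auto simp: c0sphere_def)
    show ?thesis
      using sep_subset[of DD "c0sum (Mof D)" "\<lambda>f g. supnorm (\<lambda>n. f n - g n)" "c0sphere (Mof D)",
          OF DD(1) DD(2)[unfolded eq] DD(3)[unfolded eq] sub tri sym] .
  qed
  have Qex: "\<exists>Q. countable Q \<and> Q \<subseteq> Nof E \<inter> SY \<and>
      (\<forall>y\<in>Nof E \<inter> SY. \<forall>e>0. \<exists>q\<in>Q. dist y q < e)" if "countable E" for E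
  proof -
    have cQ: "countable (qspan E)" using that by (rule countable_qspan)
    have dn: "\<forall>b\<in>Nof E. \<forall>e>0. \<exists>d\<in>qspan E. dist b d < e"
      unfolding Nof_def using closure_approachable by (metis dist_commute)
    have sub: "Nof E \<inter> SY \<subseteq> Nof E" by blast
    have tri: "\<forall>x\<in>Nof E. \<forall>y\<in>Nof E. \<forall>z\<in>Nof E. dist x z \<le> dist x y + dist y z"
      using dist_triangle by blast
    have sym: "\<forall>x\<in>Nof E. \<forall>y\<in>Nof E. dist x y = dist y x"
      using dist_commute by blast
    have "qspan E \<subseteq> Nof E" unfolding Nof_def by (rule closure_subset)
    from sep_subset[of "qspan E" "Nof E" dist "Nof E \<inter> SY", OF cQ this dn sub tri sym]
    show ?thesis .
  qed
  define PP where "PP = (\<lambda>D P. countable P \<and> P \<subseteq> c0sphere (Mof D) \<and>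
      (\<forall>f\<in>c0sphere (Mof D). \<forall>e>0. \<exists>p\<in>P. supnorm (\<lambda>n. f n - p n) < e))"
  define QQ where "QQ = (\<lambda>E Q. countable Q \<and> Q \<subseteq> Nof E \<inter> SY \<and>
      (\<forall>y\<in>Nof E \<inter> SY. \<forall>e>0. \<exists>q\<in>Q. dist y q < e))"
  have "\<exists>P. countable D \<longrightarrow> PP D P" for D
  proof (cases "countable D")
    case True
    then obtain P where "PP D P" using Pex[OF True] unfolding PP_def by blast
    then show ?thesis by blast
  qed auto
  then have "\<forall>D. \<exists>P. countable D \<longrightarrow> PP D P" by blast
  from choice[OF this] obtain Pf where Pf0: "\<forall>D. countable D \<longrightarrow> PP D (Pf D)" by blast
  have Pf: "countable (Pf D) \<and> Pf D \<subseteq> c0sphere (Mof D) \<and>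
      (\<forall>f\<in>c0sphere (Mof D). \<forall>e>0. \<exists>p\<in>Pf D. supnorm (\<lambda>n. f n - p n) < e)" if "countable D" for D
    using Pf0 that unfolding PP_def by blast
  have "\<exists>Q. countable E \<longrightarrow> QQ E Q" for E
  proof (cases "countable E")
    case True
    then obtain Q where "QQ E Q" using Qex[OF True] unfolding QQ_def by blast
    then show ?thesis by blast
  qed auto
  then have "\<forall>E. \<exists>Q. countable E \<longrightarrow> QQ E Q" by blast
  from choice[OF this] obtain Qf where Qf0: "\<forall>E. countable E \<longrightarrow> QQ E (Qf E)" by blast
  have Qf: "countable (Qf E) \<and> Qf E \<subseteq> Nof E \<inter> SY \<and>
      (\<forall>y\<in>Nof E \<inter> SY. \<forall>e>0. \<exists>q\<in>Qf E. dist y q < e)" if "countable E" for E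
    using Qf0 that unfolding QQ_def by blast
  define step where "step = (\<lambda>(D, E). (D \<union> \<Gamma> ` Qf E, E \<union> \<Delta> ` Pf D))"
  define Dk where "Dk k = fst ((step ^^ k) (D0, {}))" for k
  define Ek where "Ek k = snd ((step ^^ k) (D0, {}))" for k
  have Dk0: "Dk 0 = D0" by (simp add: Dk_def)
  have Ek0: "Ek 0 = {}" by (simp add: Ek_def)
  have DkS: "Dk (Suc k) = Dk k \<union> \<Gamma> ` Qf (Ek k)" for k
    by (simp add: Dk_def Ek_def step_def case_prod_beta)
  have EkS: "Ek (Suc k) = Ek k \<union> \<Delta> ` Pf (Dk k)" for k
    by (simp add: Dk_def Ek_def step_def case_prod_beta)
  have inv: "countable (Dk k) \<and> Dk k \<subseteq> c0sum X \<and> countable (Ek k)" for k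
  proof (induction k)
    case 0
    then show ?case using D0c D0A A_sub by (simp add: Dk0 Ek0)
  next
    case (Suc k)
    have q: "countable (Qf (Ek k))" "Qf (Ek k) \<subseteq> SY" using Qf[of "Ek k"] Suc by blast+
    have "\<Gamma> ` Qf (Ek k) \<subseteq> c0sum X" using q(2) \<Gamma>1 SX by blast
    moreover have "countable (Pf (Dk k))" using Pf[of "Dk k"] Suc by blast
    ultimately show ?case using Suc q by (simp add: DkS EkS)
  qed
  have Dc: "countable (Dk k)" and DX: "Dk k \<subseteq> c0sum X" and Ec: "countable (Ek k)" for k
    using inv by blast+
  have Dmono: "Dk i \<subseteq> Dk j" if "i \<le> j" for i j
    using lift_Suc_mono_le[of Dk, OF _ that] DkS by blast
  have Emono: "Ek i \<subseteq> Ek j" if "i \<le> j" for i j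
    using lift_Suc_mono_le[of Ek, OF _ that] EkS by blast
  define M where "M = Mof (\<Union>k. Dk k)"
  define N where "N = Nof (\<Union>k. Ek k)"
  have DUX: "(\<Union>k. Dk k) \<subseteq> c0sum X" using DX by blast
  have hM: "subspace (M n) \<and> closed (M n) \<and> M n \<subseteq> X n \<and> separable_space (top_of_set (M n))" for n
  proof (intro conjI)
    show "subspace (M n)" unfolding M_def by (rule Mof_sub)
    show "closed (M n)" unfolding M_def Mof_def by simp
    show "M n \<subseteq> X n" unfolding M_def by (rule Mof_X[OF DUX])
    have "countable (\<Union>k. Dk k)" using Dc by blast
    then show "separable_space (top_of_set (M n))" unfolding M_def Mof_def
      by (intro separable_closure_countable countable_qspan countable_image)
  qed
  have hN: "subspace N \<and> closed N \<and> separable_space (top_of_set N)"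
  proof (intro conjI)
    show "subspace N" unfolding N_def Nof_def by (rule closure_qspan_subspace)
    show "closed N" unfolding N_def Nof_def by simp
    have "countable (\<Union>k. Ek k)" using Ec by blast
    then show "separable_space (top_of_set N)" unfolding N_def Nof_def
      by (intro separable_closure_countable countable_qspan)
  qed
  let ?Mk = "\<lambda>k n. Mof (Dk k) n"
  have Mkmono: "?Mk i n \<subseteq> ?Mk j n" if "i \<le> j" for i j n
    unfolding Mof_def by (intro closure_mono qspan_mono image_mono Dmono that)
  have Msub: "M n \<subseteq> closure (\<Union>k. ?Mk k n)" for n
  proof -
    have img: "(\<lambda>d. d n) ` (\<Union>k. Dk k) = (\<Union>k. (\<lambda>d. d n) ` Dk k)" by blast
    have ch: "(\<lambda>d. d n) ` Dk i \<subseteq> (\<lambda>d. d n) ` Dk j" if "i \<le> j" for i j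
      using Dmono[OF that] by (rule image_mono)
    have "qspan ((\<lambda>d. d n) ` (\<Union>k. Dk k)) \<subseteq> (\<Union>k. qspan ((\<lambda>d. d n) ` Dk k))"
      unfolding img by (rule qspan_chain[OF ch])
    also have "\<dots> \<subseteq> (\<Union>k. ?Mk k n)" unfolding Mof_def using closure_subset by blast
    finally have "qspan ((\<lambda>d. d n) ` (\<Union>k. Dk k)) \<subseteq> (\<Union>k. ?Mk k n)" .
    then show ?thesis unfolding M_def Mof_def by (rule closure_mono)
  qed
  have Nsub: "N \<subseteq> closure (\<Union>k. qspan (Ek k))"
    unfolding N_def Nof_def by (intro closure_mono qspan_chain Emono)
  have hA: "A \<subseteq> c0sum M"
  proof
    fix a assume a: "a \<in> A"
    have aX: "a \<in> c0sum X" using a A_sub by blast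
    have "a n \<in> M n" for n
    proof -
      have "\<exists>y\<in>qspan ((\<lambda>d. d n) ` (\<Union>k. Dk k)). dist y (a n) < e" if e: "e > 0" for e
      proof -
        obtain d where d: "d \<in> D0" "supnorm (\<lambda>n. a n - d n) < e" using D0d a e by blast
        have "d \<in> A" using d(1) D0A by blast
        then have dX: "d \<in> c0sum X" using A_sub by blast
        have "norm (a n - d n) \<le> supnorm (\<lambda>n. a n - d n)"
          using supnorm_comp_le[OF c0sum_bddn[OF aX] c0sum_bddn[OF dX]] .
        then have "dist (d n) (a n) < e" using d(2) by (simp add: dist_norm norm_minus_commute)
        moreover have "d \<in> (\<Union>k. Dk k)" using d(1) Dk0 by blast
        then have "d n \<in> (\<lambda>d. d n) ` (\<Union>k. Dk k)" by (rule imageI)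
        then have "d n \<in> qspan ((\<lambda>d. d n) ` (\<Union>k. Dk k))" by (rule qspan_base)
        ultimately show ?thesis by blast
      qed
      then show ?thesis unfolding M_def Mof_def using closure_approachable by blast
    qed
    then show "a \<in> c0sum M" using aX by (auto simp: c0sum_def)
  qed
  have hD: "\<Delta> ` c0sphere M \<subseteq> N \<inter> SY"
  proof
    fix y assume "y \<in> \<Delta> ` c0sphere M"
    then obtain f where f: "f \<in> c0sphere M" "y = \<Delta> f" by blast
    have MX: "M n \<subseteq> X n" for n using hM by blast
    have fS: "f \<in> S" using f(1) c0sphere_mono[of M X, OF MX] unfolding S_def by blast
    have "y \<in> SY" using \<Delta>S fS f by simp
    moreover have "y \<in> N"
    proof -
      have "\<exists>z\<in>qspan (\<Union>k. Ek k). dist z y < e" if e: "e > 0" for e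
      proof -
        define \<epsilon> where "\<epsilon> = min (e/4) (1/4)"
        have \<epsilon>: "\<epsilon> > 0" "\<epsilon> \<le> 1/4" "3*\<epsilon> < e" using e by (auto simp: \<epsilon>_def)
        have fc: "f \<in> c0sum (\<lambda>n. closure (\<Union>k. ?Mk k n))"
          using f(1) c0sum_mono[of M "\<lambda>n. closure (\<Union>k. ?Mk k n)", OF Msub] by (auto simp: c0sphere_def)
        obtain k g where g: "g \<in> c0sum (Mof (Dk k))" "supnorm (\<lambda>n. f n - g n) < \<epsilon>"
          using trunc_approx[of ?Mk, OF Mkmono Mof_0 fc \<epsilon>(1)] by blast
        define h where "h = (\<lambda>n. (1 / supnorm g) *\<^sub>R g n)"
        have h: "h \<in> c0sphere (Mof (Dk k))" "supnorm (\<lambda>n. f n - h n) < 2*\<epsilon>"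
          using normalize_approx[OF f(1) g(1) Mof_sub g(2)] \<epsilon> unfolding h_def by auto
        obtain p where p: "p \<in> Pf (Dk k)" "supnorm (\<lambda>n. h n - p n) < \<epsilon>"
          using Pf[OF Dc[of k]] h(1) \<epsilon>(1) by blast
        have pM: "p \<in> c0sphere (Mof (Dk k))" using Pf[OF Dc[of k]] p(1) by blast
        have pS: "p \<in> S" using pM c0sphere_mono[of "Mof (Dk k)" X, OF Mof_X[OF DX[of k]]] unfolding S_def by blast
        have bf: "bddn f" using fS SX c0sum_bddn by blast
        have bh: "bddn h" using h(1) c0sum_bddn by (auto simp: c0sphere_def)
        have bp: "bddn p" using pS SX c0sum_bddn by blast
        have "supnorm (\<lambda>n. f n - p n) \<le> supnorm (\<lambda>n. f n - h n) + supnorm (\<lambda>n. h n - p n)"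
          by (rule supnorm_triangle[OF bf bh bp])
        then have "supnorm (\<lambda>n. f n - p n) < e" using h(2) p(2) \<epsilon> by linarith
        then have "dist (\<Delta> p) y < e" using iso[OF fS pS] f(2) by (simp add: dist_commute)
        moreover have "\<Delta> p \<in> Ek (Suc k)" using p(1) EkS by blast
        then have "\<Delta> p \<in> (\<Union>k. Ek k)" by blast
        then have "\<Delta> p \<in> qspan (\<Union>k. Ek k)" by (rule qspan_base)
        ultimately show ?thesis by blast
      qed
      then show ?thesis unfolding N_def Nof_def using closure_approachable by blast
    qed
    ultimately show "y \<in> N \<inter> SY" by blast
  qed
  have hG: "N \<inter> SY \<subseteq> \<Delta> ` c0sphere M"
  proof
    fix y assume y: "y \<in> N \<inter> SY"
    have ySY: "y \<in> SY" using y by blast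
    define f where "f = \<Gamma> y"
    have fS: "f \<in> S" using \<Gamma>1[OF ySY] f_def by simp
    have fy: "\<Delta> f = y" using \<Gamma>2[OF ySY] f_def by simp
    have fX: "f \<in> c0sum X" "supnorm f = 1" using fS by (auto simp: S_def c0sphere_def)
    have "f n \<in> M n" for n
    proof -
      have "\<exists>x\<in>qspan ((\<lambda>d. d n) ` (\<Union>k. Dk k)). dist x (f n) < e" if e: "e > 0" for e
      proof -
        define \<epsilon> where "\<epsilon> = min (e/4) (1/4)"
        have \<epsilon>: "\<epsilon> > 0" "\<epsilon> \<le> 1/4" "3*\<epsilon> < e" using e by (auto simp: \<epsilon>_def)
        have "y \<in> closure (\<Union>k. qspan (Ek k))" using y Nsub by blast
        then obtain z where z: "z \<in> (\<Union>k. qspan (Ek k))" "dist z y < \<epsilon>"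
          using closure_approachable \<epsilon>(1) by blast
        then obtain k where zk: "z \<in> qspan (Ek k)" by blast
        have ny: "norm y = 1" using ySY by (simp add: SY_def)
        have "\<bar>norm z - norm y\<bar> \<le> norm (z - y)" by (rule norm_triangle_ineq3)
        then have zz: "\<bar>norm z - 1\<bar> < \<epsilon>" using z(2) ny by (simp add: dist_norm)
        then have nz: "norm z > 0" using \<epsilon> by linarith
        define w where "w = (1 / norm z) *\<^sub>R z"
        have "z \<in> Nof (Ek k)" using zk closure_subset unfolding Nof_def by blast
        then have wN: "w \<in> Nof (Ek k)" unfolding w_def Nof_def
          by (intro subspace_scale closure_qspan_subspace)
        have wS: "w \<in> SY" using nz by (simp add: w_def SY_def)
        have "w - z = (1 / norm z - 1) *\<^sub>R z" by (simp add: w_def algebra_simps)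
        then have "norm (w - z) = \<bar>1 / norm z - 1\<bar> * norm z" by simp
        also have "\<dots> = \<bar>1 - norm z\<bar>" using nz by (simp add: abs_mult[symmetric] field_simps)
        finally have "dist w z < \<epsilon>" using zz by (simp add: dist_norm abs_minus_commute)
        then have wy: "dist w y < 2*\<epsilon>" using z(2) dist_triangle[of w y z] by linarith
        obtain q where q: "q \<in> Qf (Ek k)" "dist w q < \<epsilon>"
          using Qf[OF Ec[of k]] wN wS \<epsilon>(1) by blast
        have qSY: "q \<in> SY" using Qf[OF Ec[of k]] q(1) by blast
        have gS: "\<Gamma> q \<in> S" using \<Gamma>1[OF qSY] .
        have "supnorm (\<lambda>n. f n - \<Gamma> q n) = dist y q" using iso[OF fS gS] fy \<Gamma>2[OF qSY] by simp
        also have "\<dots> \<le> dist y w + dist w q" by (rule dist_triangle)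
        finally have sq: "supnorm (\<lambda>n. f n - \<Gamma> q n) < e" using wy q(2) \<epsilon> by (simp add: dist_commute)
        have "\<Gamma> q \<in> c0sum X" using gS SX by blast
        then have "norm (f n - \<Gamma> q n) \<le> supnorm (\<lambda>n. f n - \<Gamma> q n)"
          using supnorm_comp_le[OF c0sum_bddn[OF fX(1)] c0sum_bddn] by blast
        then have "dist (\<Gamma> q n) (f n) < e" using sq by (simp add: dist_norm norm_minus_commute)
        moreover have "\<Gamma> q \<in> Dk (Suc k)" using q(1) DkS by blast
        then have "\<Gamma> q \<in> (\<Union>k. Dk k)" by blast
        then have "\<Gamma> q n \<in> (\<lambda>d. d n) ` (\<Union>k. Dk k)" by (rule imageI)
        then have "\<Gamma> q n \<in> qspan ((\<lambda>d. d n) ` (\<Union>k. Dk k))" by (rule qspan_base)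
        ultimately show ?thesis by blast
      qed
      then show ?thesis unfolding M_def Mof_def using closure_approachable by blast
    qed
    then have "f \<in> c0sphere M" using fX fS by (auto simp: c0sphere_def c0sum_def S_def)
    then show "y \<in> \<Delta> ` c0sphere M" using fy by blast
  qed
  have eq: "\<Delta> ` c0sphere M = N \<inter> sphere 0 1" using hD hG unfolding SY_def by (rule equalityI)
  show ?thesis
  proof (intro exI[of _ M] exI[of _ N] conjI allI)
    fix n show "subspace (M n)" "closed (M n)" "M n \<subseteq> X n" "separable_space (top_of_set (M n))"
      using hM[of n] by auto
  qed (use hN hA eq in auto)
qed


end
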